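(* Let $S$ and $T$ be $*$-regular semigroups, regarded as DRC-semigroups via $D(a)=aa^\dagger$, $R(a)=a^\dagger a$. If $\phi:S\to T$ is a DRC-morphism (a semigroup homomorphism with $D(a)\phi=D(a\phi)$ and $R(a)\phi=R(a\phi)$ for all $a$), then $(a^\dagger)\phi=(a\phi)^\dagger$ for all $a\in S$.
   Context: A $*$-regular semigroup is a semigroup $S$ with an involution $a\mapsto a^*$ ($a^{**}=a$, $(ab)^*=b^*a^*$) such that each $a\in S$ has a (unique) element $a^\dagger$ (the Moore–Penrose inverse) with $aa^\dagger a=a$, $a^\dagger aa^\dagger=a^\dagger$, $(aa^\dagger)^*=aa^\dagger$, $(a^\dagger a)^*=a^\dagger a$. With $D(a)=aa^\dagger$ and $R(a)=a^\dagger a$, it is a DRC-semigroup (an algebra $(S,\cdot,D,R)$ satisfying $D(a)a=a$, $aR(a)=a$, $D(ab)=D(aD(b))$, $R(ab)=R(R(a)b)$, $D(ab)=D(a)D(ab)D(a)$, $R(ab)=R(b)R(ab)R(b)$, $R(D(a))=D(a)$, $D(R(a))=R(a)$). *)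

theory Defs
  imports Main
begin

definition is_semigroup :: "('a \<Rightarrow> 'a \<Rightarrow> 'a) \<Rightarrow> bool" where
  "is_semigroup m \<longleftrightarrow> (\<forall>a b c. m (m a b) c = m a (m b c))"

definition is_MP_inverse :: "('a \<Rightarrow> 'a \<Rightarrow> 'a) \<Rightarrow> ('a \<Rightarrow> 'a) \<Rightarrow> 'a \<Rightarrow> 'a \<Rightarrow> bool" where
  "is_MP_inverse m st a x \<longleftrightarrow>
     m (m a x) a = a \<and> m (m x a) x = x \<and>
     st (m a x) = m a x \<and> st (m x a) = m x a"

definition star_regular_semigroup :: "('a \<Rightarrow> 'a \<Rightarrow> 'a) \<Rightarrow> ('a \<Rightarrow> 'a) \<Rightarrow> bool" where
  "star_regular_semigroup m st \<longleftrightarrow>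
     is_semigroup m \<and>
     (\<forall>a. st (st a) = a) \<and>
     (\<forall>a b. st (m a b) = m (st b) (st a)) \<and>
     (\<forall>a. \<exists>x. is_MP_inverse m st a x)"

definition mp_inv :: "('a \<Rightarrow> 'a \<Rightarrow> 'a) \<Rightarrow> ('a \<Rightarrow> 'a) \<Rightarrow> 'a \<Rightarrow> 'a" where
  "mp_inv m st a = (THE x. is_MP_inverse m st a x)"

definition opD :: "('a \<Rightarrow> 'a \<Rightarrow> 'a) \<Rightarrow> ('a \<Rightarrow> 'a) \<Rightarrow> 'a \<Rightarrow> 'a" where
  "opD m st a = m a (mp_inv m st a)"

definition opR :: "('a \<Rightarrow> 'a \<Rightarrow> 'a) \<Rightarrow> ('a \<Rightarrow> 'a) \<Rightarrow> 'a \<Rightarrow> 'a" where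
  "opR m st a = m (mp_inv m st a) a"

definition DRC_morphism ::
  "('a \<Rightarrow> 'a \<Rightarrow> 'a) \<Rightarrow> ('a \<Rightarrow> 'a) \<Rightarrow> ('a \<Rightarrow> 'a) \<Rightarrow>
   ('b \<Rightarrow> 'b \<Rightarrow> 'b) \<Rightarrow> ('b \<Rightarrow> 'b) \<Rightarrow> ('b \<Rightarrow> 'b) \<Rightarrow> ('a \<Rightarrow> 'b) \<Rightarrow> bool" where
  "DRC_morphism mS DS RS mT DT RT \<phi> \<longleftrightarrow>
     (\<forall>a b. \<phi> (mS a b) = mT (\<phi> a) (\<phi> b)) \<and>
     (\<forall>a. \<phi> (DS a) = DT (\<phi> a)) \<and>
     (\<forall>a. \<phi> (RS a) = RT (\<phi> a))"

end

theory Submission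
  imports Defs
begin

lemma mp_unique:
  assumes A: "\<And>a b c. m (m a b) c = m a (m b c)"
    and I: "\<And>a. st (st a) = a"
    and H: "\<And>a b. st (m a b) = m (st b) (st a)"
    and X: "is_MP_inverse m st a x" and Y: "is_MP_inverse m st a y"
  shows "x = y"
proof -
  from X have x1: "m (m a x) a = a" and x2: "m (m x a) x = x" and x3: "st (m a x) = m a x"
    and x4: "st (m x a) = m x a" by (auto simp: is_MP_inverse_def)
  from Y have y1: "m (m a y) a = a" and y2: "m (m y a) y = y" and y3: "st (m a y) = m a y"
    and y4: "st (m y a) = m y a" by (auto simp: is_MP_inverse_def)
  have "x = m x (m a x)" using x2 A by simp
  also have "\<dots> = m x (st (m a x))" using x3 by simp
  also have "\<dots> = m x (m (st x) (st a))" using H by simp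
  also have "st a = st (m (m a y) a)" using y1 by simp
  also have "\<dots> = m (st a) (m (st y) (st a))" using H A by simp
  finally have "x = m x (m (m (st x) (st a)) (m (st y) (st a)))" using A by simp
  also have "\<dots> = m x (m (st (m a x)) (st (m a y)))" using H A by simp
  also have "\<dots> = m x (m (m a x) (m a y))" using x3 y3 by simp
  also have "\<dots> = m (m (m x a) x) (m a y)" using A by simp
  also have "\<dots> = m x (m a y)" using x2 by simp
  finally have ex: "x = m x (m a y)" .
  have "y = m (m y a) y" using y2 by simp
  also have "\<dots> = m (st (m y a)) y" using y4 by simp
  also have "\<dots> = m (m (st a) (st y)) y" using H by simp
  also have "st a = st (m (m a x) a)" using x1 by simp
  also have "\<dots> = m (m (st a) (st x)) (st a)" using H A by simp
  finally have "y = m (m (m (st a) (st x)) (m (st a) (st y))) y" using A by simp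
  also have "\<dots> = m (m (st (m x a)) (st (m y a))) y" using H A by simp
  also have "\<dots> = m (m (m x a) (m y a)) y" using x4 y4 by simp
  also have "\<dots> = m (m x a) (m (m y a) y)" using A by simp
  also have "\<dots> = m (m x a) y" using y2 by simp
  finally have ey: "y = m x (m a y)" using A by simp
  show ?thesis using ex ey by simp
qed

lemma mp_inv_is:
  assumes "star_regular_semigroup m st"
  shows "is_MP_inverse m st a (mp_inv m st a)"
proof -
  from assms obtain x where x: "is_MP_inverse m st a x"
    unfolding star_regular_semigroup_def by blast
  have "\<And>y. is_MP_inverse m st a y \<Longrightarrow> y = x"
    using assms x mp_unique[of m st a]
    by (auto simp: star_regular_semigroup_def is_semigroup_def)
  then show ?thesis unfolding mp_inv_def using x by (metis theI)
qed

lemma mp_inv_eq: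
  assumes "star_regular_semigroup m st" "is_MP_inverse m st a y"
  shows "mp_inv m st a = y"
  using mp_unique[of m st a] mp_inv_is[OF assms(1), of a] assms
  by (auto simp: star_regular_semigroup_def is_semigroup_def)

theorem proposition9p3:
  fixes mS :: "'a \<Rightarrow> 'a \<Rightarrow> 'a" and stS :: "'a \<Rightarrow> 'a"
    and mT :: "'b \<Rightarrow> 'b \<Rightarrow> 'b" and stT :: "'b \<Rightarrow> 'b"
    and \<phi> :: "'a \<Rightarrow> 'b"
  assumes "star_regular_semigroup mS stS"
    and "star_regular_semigroup mT stT"
    and "DRC_morphism mS (opD mS stS) (opR mS stS) mT (opD mT stT) (opR mT stT) \<phi>"
  shows "\<forall>a. \<phi> (mp_inv mS stS a) = mp_inv mT stT (\<phi> a)"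
proof
  fix a
  let ?x = "mp_inv mS stS a" and ?b = "\<phi> a"
  have hom: "\<And>u v. \<phi> (mS u v) = mT (\<phi> u) (\<phi> v)"
    and D: "\<And>u. \<phi> (opD mS stS u) = opD mT stT (\<phi> u)"
    and R: "\<And>u. \<phi> (opR mS stS u) = opR mT stT (\<phi> u)"
    using assms(3) by (auto simp: DRC_morphism_def)
  have sx: "is_MP_inverse mS stS a ?x" by (rule mp_inv_is[OF assms(1)])
  have tb: "is_MP_inverse mT stT ?b (mp_inv mT stT ?b)" by (rule mp_inv_is[OF assms(2)])
  have e1: "mT ?b (\<phi> ?x) = opD mT stT ?b" using D[of a] hom by (simp add: opD_def)
  have e2: "mT (\<phi> ?x) ?b = opR mT stT ?b" using R[of a] hom by (simp add: opR_def)
  have "is_MP_inverse mT stT ?b (\<phi> ?x)"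
    unfolding is_MP_inverse_def
  proof (intro conjI)
    show "mT (mT ?b (\<phi> ?x)) ?b = ?b" using sx hom by (metis is_MP_inverse_def)
    show "mT (mT (\<phi> ?x) ?b) (\<phi> ?x) = \<phi> ?x" using sx hom by (metis is_MP_inverse_def)
    show "stT (mT ?b (\<phi> ?x)) = mT ?b (\<phi> ?x)" using tb e1 by (simp add: opD_def is_MP_inverse_def)
    show "stT (mT (\<phi> ?x) ?b) = mT (\<phi> ?x) ?b" using tb e2 by (simp add: opR_def is_MP_inverse_def)
  qed
  then show "\<phi> ?x = mp_inv mT stT ?b" using mp_inv_eq[OF assms(2)] by metis
qed

end
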